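(* Let $\kappa>0$, let $N\ge2$ be even, and let $X_N\in\mathbb R^{(N-1)\times(N-1)}$ be the matrix with entries $(X_N)_{ij}=a_{i\wedge j}\,a_{N-(i\vee j)}/a_N$ for $1\le i,j\le N-1$. Then for all $k\ge1$ and all $1\le i\le j\le N/2$: $$(X_N^k)_{N/2,N/2}\ge\frac{a_{N/2}^2\big\{\sum_{l=1}^{N-1}a_{l\wedge(N-l)}^2\big\}^{k-1}}{a_N^k},$$ $$(X_N^k)_{N/2,i}=(X_N^k)_{N/2,N-i},\qquad (X_N^k)_{N/2,i}\le(X_N^k)_{N/2,j},\qquad (X_N^k)_{N/2,i}\ge\frac{a_i}{a_{N/2}}(X_N^k)_{N/2,N/2}.$$
   Context: The sequence $\{a_i\}_{i\ge0}$ is defined by $a_0=0$, $a_1=1$ and $a_i=(2+\kappa^2/N^2)a_{i-1}-a_{i-2}$ for $i\ge2$. *)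

theory Defs
  imports Complex_Main
begin

fun aseq :: "real \<Rightarrow> nat \<Rightarrow> nat \<Rightarrow> real" where
  "aseq \<kappa> N 0 = 0"
| "aseq \<kappa> N (Suc 0) = 1"
| "aseq \<kappa> N (Suc (Suc i)) = (2 + \<kappa>^2 / (real N)^2) * aseq \<kappa> N (Suc i) - aseq \<kappa> N i"

text \<open>Entries of X_N, indexed by 1 <= i,j <= N-1 (values outside are irrelevant).\<close>
definition XN :: "real \<Rightarrow> nat \<Rightarrow> nat \<Rightarrow> nat \<Rightarrow> real" where
  "XN \<kappa> N i j = aseq \<kappa> N (min i j) * aseq \<kappa> N (N - max i j) / aseq \<kappa> N N"

fun matpow :: "nat \<Rightarrow> (nat \<Rightarrow> nat \<Rightarrow> real) \<Rightarrow> nat \<Rightarrow> nat \<Rightarrow> nat \<Rightarrow> real" where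
  "matpow n A 0 i j = (if i = j then 1 else 0)"
| "matpow n A (Suc k) i j = (\<Sum>l=1..n. matpow n A k i l * A l j)"

end

theory Submission
  imports Defs
begin

lemma minprin:
  fixes w v :: "nat \<Rightarrow> real" and cc :: real and m :: nat
  assumes cc: "cc > 2" and m1: "m \<ge> 1" and w0: "w 0 = 0" and wsym: "w (m+1) = w (m-1)"
    and wpos: "\<forall>j. w j \<ge> 0"
    and eq: "\<forall>j. 1 \<le> j \<and> j \<le> m \<longrightarrow> cc * w j - w (j-1) - w (j+1) = v j"
    and vm: "\<forall>j. 2 \<le> j \<and> j \<le> m \<longrightarrow> v (j-1) \<le> v j"
  shows "\<forall>j. 2 \<le> j \<and> j \<le> m \<longrightarrow> w (j-1) \<le> w j"
proof -
  define d where "d j = w j - w (j-1)" for j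
  have fin: "finite (d ` {1..m})" and ne: "d ` {1..m} \<noteq> {}" using m1 by auto
  obtain j0 where j0: "j0 \<in> {1..m}" "d j0 = Min (d ` {1..m})" using Min_in[OF fin ne] by auto
  have mn: "d j0 \<le> d j" if "j \<in> {1..m}" for j using j0 Min_le[OF fin] that by auto
  have "d j0 \<ge> 0"
  proof (rule ccontr)
    assume neg: "\<not> d j0 \<ge> 0"
    have "j0 \<noteq> 1" using neg w0 wpos unfolding d_def by auto
    define t where "t = j0 - 2"
    have t: "j0 = Suc (Suc t)" using j0 \<open>j0 \<noteq> 1\<close> t_def by auto
    have e1: "cc * w (Suc (Suc t)) - w (Suc t) - w (Suc (Suc (Suc t))) = v (Suc (Suc t))"
      using eq j0 t by auto
    have e2: "cc * w (Suc t) - w t - w (Suc (Suc t)) = v (Suc t)"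
      using eq[rule_format, of "Suc t"] j0 t by auto
    have vv: "v (Suc t) \<le> v (Suc (Suc t))" using vm[rule_format, of "Suc (Suc t)"] j0 t by auto
    have dm: "d (Suc t) \<ge> d j0" using mn t j0 by auto
    have pn: "(cc - 2) * d j0 < 0" using cc neg by (simp add: mult_pos_neg)
    then have pn': "cc * w (Suc (Suc t)) - cc * w (Suc t) - 2 * w (Suc (Suc t)) + 2 * w (Suc t) < 0"
      using t by (simp add: d_def algebra_simps)
    show False
    proof (cases "j0 = m")
      case True
      have "m + 1 = Suc (Suc (Suc t))" "m - 1 = Suc t" using True t by auto
      then have "w (Suc (Suc (Suc t))) = w (Suc t)" using wsym by simp
      then show False using e1 e2 vv dm pn' neg t unfolding d_def by simp
    next
      case False
      then have dp: "d (Suc (Suc (Suc t))) \<ge> d j0" using mn t j0 by auto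
      then show False using e1 e2 vv dm pn' neg t unfolding d_def by simp
    qed
  qed
  show ?thesis
  proof (intro allI impI)
    fix j assume "2 \<le> j \<and> j \<le> m"
    then have "d j0 \<le> d j" using mn by auto
    then show "w (j - 1) \<le> w j" using \<open>d j0 \<ge> 0\<close> unfolding d_def by simp
  qed
qed

locale LA =
  fixes \<kappa> :: real and N :: nat
  assumes kpos: "\<kappa> > 0" and N2: "N \<ge> 2" and Neven: "even N"
begin

abbreviation "a \<equiv> aseq \<kappa> N"
abbreviation "c \<equiv> 2 + \<kappa>^2 / (real N)^2"
abbreviation "X \<equiv> XN \<kappa> N"
abbreviation "m \<equiv> N div 2"
abbreviation "V \<equiv> matpow (N - 1) X"

lemma c_gt: "c > 2"
  using kpos N2 by simp

lemma a_rec: "a (Suc (Suc i)) = c * a (Suc i) - a i"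
  by simp

lemma a_inc: "a i < a (Suc i) \<and> 0 \<le> a i"
proof (induction i)
  case 0 then show ?case by simp
next
  case (Suc i)
  have t: "\<kappa>^2/(real N)^2 * a (Suc i) \<ge> 0" using Suc by simp
  have "a (Suc (Suc i)) = 2 * a (Suc i) + \<kappa>^2/(real N)^2 * a (Suc i) - a i"
    by (simp add: distrib_right)
  then show ?case using t Suc by linarith
qed

lemma a_nonneg: "0 \<le> a i" using a_inc by blast

lemma a_mono: "i \<le> j \<Longrightarrow> a i \<le> a j"
  by (rule lift_Suc_mono_le[of a]) (use a_inc less_imp_le in auto)

lemma a_pos: "1 \<le> i \<Longrightarrow> 0 < a i"
  using a_mono[of 1 i] by simp

lemma casor: "a (Suc p) * a (Suc q) - a p * a q = a (p + q + 1)"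
proof (induction p arbitrary: q)
  case 0 then show ?case by simp
next
  case (Suc p)
  have "a (Suc (Suc p)) * a (Suc q) - a (Suc p) * a q
      = a (Suc p) * (c * a (Suc q) - a q) - a p * a (Suc q)"
    by (simp add: algebra_simps)
  also have "\<dots> = a (Suc p) * a (Suc (Suc q)) - a p * a (Suc q)" by simp
  also have "\<dots> = a (p + Suc q + 1)" using Suc[of "Suc q"] by simp
  finally show ?case by simp
qed

lemma aN_pos: "a N > 0" using a_pos N2 by simp

lemma lin: "(cc * x - y - z) * b / (d::real) = cc * (x * b / d) - y * b / d - z * b / d"
  by (simp add: diff_divide_distrib add_divide_distrib algebra_simps)

lemma X_eq: assumes "1 \<le> l" "l \<le> N - 1" "1 \<le> j" "j \<le> N - 1"
  shows "c * X l j - X l (j - 1) - X l (j + 1) = (if l = j then 1 else 0)"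
proof -
  have aN: "a N \<noteq> 0" using aN_pos by simp
  consider "j < l" | "l < j" | "j = l" by linarith
  then show ?thesis
  proof cases
    case 1
    then obtain t where t: "j = Suc t" using assms by (cases j) auto
    have x1: "X l j = a (Suc t) * a (N - l) / a N" "X l (j - 1) = a t * a (N - l) / a N"
      "X l (j + 1) = a (Suc (Suc t)) * a (N - l) / a N"
    proof -
      have "min l j = j" "max l j = l" "min l (j-1) = j-1" "max l (j-1) = l"
        "min l (j+1) = j+1" "max l (j+1) = l" using 1 by auto
      then show "X l j = a (Suc t) * a (N - l) / a N" "X l (j - 1) = a t * a (N - l) / a N"
      "X l (j + 1) = a (Suc (Suc t)) * a (N - l) / a N" using t by (simp_all add: XN_def)
    qed
    have "c * X l j - X l (j - 1) - X l (j + 1)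
        = (c * a (Suc t) - a t - a (Suc (Suc t))) * a (N - l) / a N"
      unfolding x1 lin by simp
    also have "\<dots> = 0" by (simp only: a_rec) simp
    finally show ?thesis using 1 by simp
  next
    case 2
    then obtain q where q: "N - j = Suc q" using assms by (cases "N - j") auto
    have e1: "N - (j - 1) = Suc (Suc q)" using q 2 assms by linarith
    have e2: "N - (j + 1) = q" using q by linarith
    have x1: "X l j = a (Suc q) * a l / a N" "X l (j - 1) = a (Suc (Suc q)) * a l / a N"
      "X l (j + 1) = a q * a l / a N"
      using 2 q e1 e2 by (auto simp: XN_def min_def max_def mult.commute)
    have "c * X l j - X l (j - 1) - X l (j + 1)
        = (c * a (Suc q) - a (Suc (Suc q)) - a q) * a l / a N"
      unfolding x1 lin by simp
    also have "\<dots> = 0" by (simp only: a_rec) simp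
    finally show ?thesis using 2 by simp
  next
    case 3
    obtain p where p: "l = Suc p" using assms by (cases l) auto
    obtain q where q: "N - l = Suc q" using assms by (cases "N - l") auto
    have e2: "N - (l + 1) = q" using q by linarith
    have NN: "N = p + (Suc q) + 1" using p q assms by linarith
    have x1: "X l j = a (Suc p) * a (Suc q) / a N" "X l (j - 1) = a p * a (Suc q) / a N"
      "X l (j + 1) = a (Suc p) * a q / a N"
      using 3 p q e2 by (auto simp: XN_def min_def max_def)
    have "c * X l j - X l (j - 1) - X l (j + 1)
        = (c * a (Suc p) * a (Suc q) - a p * a (Suc q) - a (Suc p) * a q) / a N"
      unfolding x1 by (simp add: diff_divide_distrib)
    also have "c * a (Suc p) * a (Suc q) - a p * a (Suc q) - a (Suc p) * a q
        = a (Suc (Suc p)) * a (Suc q) - a (Suc p) * a q" by (simp add: algebra_simps)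
    also have "\<dots> = a N" using casor[of "Suc p" q] NN by simp
    finally show ?thesis using 3 aN by simp
  qed
qed

lemma X_nonneg: "X l j \<ge> 0"
  unfolding XN_def using a_nonneg aN_pos by simp

lemma X_sym: assumes "l \<le> N" "j \<le> N" shows "X l (N - j) = X (N - l) j"
proof -
  have "min l (N - j) = N - max (N - l) j" "N - max l (N - j) = min (N - l) j"
    using assms by auto
  then show ?thesis unfolding XN_def by (simp add: mult.commute)
qed

lemma X_low: assumes "l \<le> N" "j \<le> N"
  shows "X l j \<ge> a (min l (N - l)) * a (min j (N - j)) / a N"
proof -
  have "a (min l (N - l)) * a (min j (N - j)) \<le> a (min l j) * a (N - max l j)"
  proof (cases "l \<le> j")
    case True
    then show ?thesis using assms
      by (intro mult_mono a_mono a_nonneg) auto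
  next
    case False
    then have "a (min j (N - j)) * a (min l (N - l)) \<le> a (min l j) * a (N - max l j)"
      using assms by (intro mult_mono a_mono a_nonneg) auto
    then show ?thesis by (simp add: mult.commute)
  qed
  then show ?thesis unfolding XN_def using aN_pos by (simp add: divide_right_mono)
qed

lemma X_ratio: assumes "1 \<le> i" "i \<le> m" "l \<le> N"
  shows "X l m * a i \<le> X l i * a m"
proof -
  have "a (min l m) * a (N - max l m) * a i \<le> a (min l i) * a (N - max l i) * a m"
  proof -
    consider "m \<le> l" | "i \<le> l" "l < m" | "l < i" by linarith
    then show ?thesis
    proof cases
      case 1 then show ?thesis using assms by (simp add: min_def max_def algebra_simps)
    next
      case 2
      have "a l * a (N - m) \<le> a m * a (N - l)"
        using 2 by (intro mult_mono a_mono a_nonneg) auto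
      then have "a i * (a l * a (N - m)) \<le> a i * (a m * a (N - l))"
        by (simp add: a_nonneg mult_left_mono)
      have "min l m = l" "max l m = m" "min l i = i" "max l i = l" using 2 by auto
      then show ?thesis using \<open>a i * (a l * a (N - m)) \<le> a i * (a m * a (N - l))\<close>
        by (simp add: algebra_simps)
    next
      case 3
      have "a (N - m) * a i \<le> a (N - i) * a m"
        using 3 assms by (intro mult_mono a_mono a_nonneg) auto
      then have "a l * (a (N - m) * a i) \<le> a l * (a (N - i) * a m)"
        by (simp add: a_nonneg mult_left_mono)
      then show ?thesis using 3 assms by (simp add: min_def max_def algebra_simps)
    qed
  qed
  then show ?thesis unfolding XN_def using aN_pos
    by (simp add: divide_right_mono)
qed

abbreviation "S \<equiv> (\<Sum>l=1..N-1. a (min l (N - l))^2)"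

lemma N_eq: "N = 2 * m" using Neven by simp

lemma w_eq: assumes "1 \<le> j" "j \<le> N - 1"
  shows "c * V (Suc k) i j - V (Suc k) i (j - 1) - V (Suc k) i (j + 1) = V k i j"
proof -
  have "c * V (Suc k) i j - V (Suc k) i (j - 1) - V (Suc k) i (j + 1)
      = (\<Sum>l=1..N-1. V k i l * (c * X l j - X l (j - 1) - X l (j + 1)))"
    by (simp add: sum_subtractf sum_distrib_left sum.distrib algebra_simps)
  also have "\<dots> = (\<Sum>l=1..N-1. if l = j then V k i l else 0)"
    by (rule sum.cong) (use X_eq assms in auto)
  also have "\<dots> = V k i j" using assms by simp
  finally show ?thesis .
qed

lemma V_nonneg: "V k i j \<ge> 0"
proof (induction k arbitrary: j)
  case 0 then show ?case by simp
next
  case (Suc k) then show ?case by (simp add: sum_nonneg X_nonneg)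
qed

lemma V_sym: "l \<le> N \<Longrightarrow> V k m (N - l) = V k m l"
proof (induction k arbitrary: l)
  case 0 then show ?case using N_eq by auto
next
  case (Suc k)
  have "V (Suc k) m (N - l) = (\<Sum>l'=1..N-1. V k m l' * X l' (N - l))" by simp
  also have "\<dots> = (\<Sum>l'=1..N-1. (\<lambda>t. V k m t * X t l) (N - 1 + 1 - l'))"
  proof (rule sum.cong)
    fix l' assume "l' \<in> {1..N-1}"
    then have "l' \<le> N" "N - 1 + 1 - l' = N - l'" by auto
    then show "V k m l' * X l' (N - l) = (\<lambda>t. V k m t * X t l) (N - 1 + 1 - l')"
      using Suc.IH[of l'] X_sym[of l' l] Suc.prems by simp
  qed simp
  also have "\<dots> = (\<Sum>l'=1..N-1. V k m l' * X l' l)"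
    by (rule sum.atLeastAtMost_rev[symmetric])
  finally show ?case by simp
qed

lemma V_mono: "2 \<le> j \<Longrightarrow> j \<le> m \<Longrightarrow> V k m (j - 1) \<le> V k m j"
proof (induction k arbitrary: j)
  case 0 then show ?case by simp
next
  case (Suc k)
  have m1: "m \<ge> 1" using N2 N_eq by simp
  have "\<forall>j. 2 \<le> j \<and> j \<le> m \<longrightarrow> V (Suc k) m (j-1) \<le> V (Suc k) m j"
  proof (rule minprin[where cc = c and v = "V k m"])
    show "c > 2" by (rule c_gt)
    show "m \<ge> 1" by (rule m1)
    show "V (Suc k) m 0 = 0" by (simp add: XN_def)
    show "V (Suc k) m (m + 1) = V (Suc k) m (m - 1)"
    proof -
      have "N - (m - 1) = m + 1" using N_eq m1 by simp
      then show ?thesis using V_sym[of "m - 1" "Suc k"] N_eq by simp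
    qed
    show "\<forall>j. 0 \<le> V (Suc k) m j" using V_nonneg by blast
    show "\<forall>j. 1 \<le> j \<and> j \<le> m \<longrightarrow> c * V (Suc k) m j - V (Suc k) m (j - 1) - V (Suc k) m (j + 1) = V k m j"
      using w_eq N_eq by auto
    show "\<forall>j. 2 \<le> j \<and> j \<le> m \<longrightarrow> V k m (j - 1) \<le> V k m j" using Suc.IH by blast
  qed
  then show ?case using Suc.prems by blast
qed

lemma V_chain: assumes "1 \<le> i" "i \<le> j" "j \<le> m" shows "V k m i \<le> V k m j"
  using assms(2,3)
proof (induction j rule: dec_induct)
  case base then show ?case by simp
next
  case (step n)
  then have "V k m n \<le> V k m (Suc n)" using V_mono[of "Suc n" k] assms(1) by simp
  then show ?case using step by simp
qed

lemma V_low: "l \<le> N \<Longrightarrow> V (Suc k) m l \<ge> a (min l (N - l)) * a m * S^k / a N ^ Suc k"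
proof (induction k arbitrary: l)
  case 0
  have m1: "m \<ge> 1" "m \<le> N - 1" using N2 N_eq by auto
  have "V (Suc 0) m l = (\<Sum>l'=1..N-1. (if m = l' then 1 else 0) * X l' l)" by simp
  also have "\<dots> = (\<Sum>l'=1..N-1. if l' = m then X l' l else 0)"
    by (rule sum.cong) auto
  also have "\<dots> = X m l" using m1 by simp
  finally have "V (Suc 0) m l = X m l" .
  moreover have "min m (N - m) = m" using N_eq by simp
  ultimately show ?case using X_low[of m l] 0 N_eq by (simp add: mult.commute)
next
  case (Suc k)
  let ?B = "\<lambda>l. a (min l (N - l)) * a m * S^k / a N ^ Suc k"
  have "(\<Sum>l'=1..N-1. ?B l' * (a (min l' (N - l')) * a (min l (N - l)) / a N))
      \<le> (\<Sum>l'=1..N-1. V (Suc k) m l' * X l' l)"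
  proof (rule sum_mono)
    fix l' assume l'0: "l' \<in> {1..N-1}"
    from l'0 show "?B l' * (a (min l' (N - l')) * a (min l (N - l)) / a N) \<le> V (Suc k) m l' * X l' l"
    proof -
      assume l': "l' \<in> {1..N-1}"
      have h1: "?B l' \<le> V (Suc k) m l'" using Suc.IH[of l'] l' by auto
      have h2: "a (min l' (N - l')) * a (min l (N - l)) / a N \<le> X l' l"
        using X_low[of l' l] l' Suc.prems by auto
      have h3: "0 \<le> V (Suc k) m l'" by (rule V_nonneg)
      have h4: "0 \<le> a (min l' (N - l')) * a (min l (N - l)) / a N"
        using a_nonneg aN_pos by simp
      show ?thesis by (rule mult_mono[OF h1 h2 h3 h4])
    qed
  qed
  also have "\<dots> = V (Suc (Suc k)) m l" by simp
  also have "(\<Sum>l'=1..N-1. ?B l' * (a (min l' (N - l')) * a (min l (N - l)) / a N))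
      = (\<Sum>l'=1..N-1. (a (min l (N - l)) * a m * S^k / a N ^ Suc (Suc k)) * a (min l' (N - l'))^2)"
    by (rule sum.cong) (use aN_pos in \<open>simp_all add: power2_eq_square field_simps\<close>)
  also have "\<dots> = (a (min l (N - l)) * a m * S^k / a N ^ Suc (Suc k)) * S"
    by (simp add: sum_distrib_left)
  also have "\<dots> = a (min l (N - l)) * a m * S ^ Suc k / a N ^ Suc (Suc k)"
    by (simp add: field_simps)
  finally show ?case .
qed

lemma V_ratio: assumes "1 \<le> i" "i \<le> m"
  shows "a i * V (Suc k) m m \<le> a m * V (Suc k) m i"
proof -
  have "a i * V (Suc k) m m = (\<Sum>l=1..N-1. V k m l * (X l m * a i))"
    by (simp add: sum_distrib_left algebra_simps)
  also have "\<dots> \<le> (\<Sum>l=1..N-1. V k m l * (X l i * a m))"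
    by (rule sum_mono, rule mult_left_mono) (use X_ratio assms V_nonneg in auto)
  also have "\<dots> = a m * V (Suc k) m i"
    by (simp add: sum_distrib_left algebra_simps)
  finally show ?thesis .
qed

end

theorem lemmaA3:
  fixes \<kappa> :: real and N k i j :: nat
  assumes "\<kappa> > 0" and "N \<ge> 2" and "even N"
    and "k \<ge> 1" and "1 \<le> i" and "i \<le> j" and "j \<le> N div 2"
  defines "a \<equiv> aseq \<kappa> N"
    and "P \<equiv> matpow (N - 1) (XN \<kappa> N) k"
  shows "P (N div 2) (N div 2) \<ge>
           a (N div 2)^2 * (\<Sum>l=1..N-1. a (min l (N - l))^2)^(k - 1) / a N ^ k
     \<and> P (N div 2) i = P (N div 2) (N - i)
     \<and> P (N div 2) i \<le> P (N div 2) j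
     \<and> P (N div 2) i \<ge> a i / a (N div 2) * P (N div 2) (N div 2)"
proof -
  interpret LA \<kappa> N using assms(1-3) by unfold_locales
  obtain k' where k': "k = Suc k'" using assms(4) by (cases k) auto
  have m1: "1 \<le> N div 2" "N div 2 \<le> N" using assms(2) by auto
  have s1: "matpow (N - 1) (XN \<kappa> N) k (N div 2) (N div 2) \<ge>
           aseq \<kappa> N (N div 2)^2 * (\<Sum>l=1..N-1. aseq \<kappa> N (min l (N - l))^2)^(k - 1) / aseq \<kappa> N N ^ k"
  proof -
    have "min (N div 2) (N - N div 2) = N div 2" using N_eq by simp
    then show ?thesis using V_low[of "N div 2" k'] m1 k' by (simp add: power2_eq_square)
  qed
  have s2: "matpow (N - 1) (XN \<kappa> N) k (N div 2) i = matpow (N - 1) (XN \<kappa> N) k (N div 2) (N - i)"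
    using V_sym[of i k] assms by simp
  have s3: "matpow (N - 1) (XN \<kappa> N) k (N div 2) i \<le> matpow (N - 1) (XN \<kappa> N) k (N div 2) j"
    using V_chain[of i j k] assms by simp
  have s4: "matpow (N - 1) (XN \<kappa> N) k (N div 2) i \<ge>
     aseq \<kappa> N i / aseq \<kappa> N (N div 2) * matpow (N - 1) (XN \<kappa> N) k (N div 2) (N div 2)"
  proof -
    have pm: "aseq \<kappa> N (N div 2) > 0" using a_pos m1 by simp
    have "aseq \<kappa> N i * matpow (N - 1) (XN \<kappa> N) k (N div 2) (N div 2)
       \<le> aseq \<kappa> N (N div 2) * matpow (N - 1) (XN \<kappa> N) k (N div 2) i"
      using V_ratio[of i k'] assms k' by simp
    then show ?thesis using pm by (simp add: pos_divide_le_eq mult.commute)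
  qed
  show ?thesis unfolding a_def P_def using s1 s2 s3 s4 by blast
qed

end
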